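(* Let $G$ be a labeled complete graph, let $0<\gamma<\alpha<1/2$, and let $x$ be a fractional clustering of $G$. Run the following algorithm: set $S=V(G)$; while $S\ne\emptyset$, for each $u\in S$ let $T_u=\{w\in S\setminus\{u\}: x_{uw}\le\alpha\}$ and $T^*_u=\{w\in S\setminus\{u\}:x_{uw}\le\gamma\}$, choose a pivot $u\in S$ maximizing $|T^*_u|$, let $T=T_u$, and if $\sum_{w\in T}x_{uw}\ge\alpha|T|/2$ output $\{u\}$ and remove $u$ from $S$, otherwise output $\{u\}\cup T$ and remove $\{u\}\cup T$ from $S$. Consider any iteration in which the cluster $\{u\}\cup T$ is output (i.e. $\sum_{w\in T}x_{uw}<\alpha|T|/2$), and let $S$ denote the set of remaining vertices at the start of that iteration. Then for every $z\in S\setminus(\{u\}\cup T)$, \[ \bigl|N^+(z)\cap(\{u\}\cup T)\bigr| \le \max\left\{\tfrac{1}{1-2\alpha},\tfrac{2}{\alpha}\right\}\left(\sum_{w\in N^+(z)\cap(\{u\}\cup T)}x_{zw}+\sum_{w\in N^-(z)\cap(\{u\}\cup T)}(1-x_{zw})\right). \]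
   Context: A fractional clustering of $G$ is a vector $x$ indexed by unordered pairs of distinct vertices with $x_{uv}\in[0,1]$ and $x_{vz}\le x_{vw}+x_{wz}$ for all distinct $v,w,z$; $x_{uu}=0$. $N^+(z)$, $N^-(z)$ are the sets of vertices joined to $z$ by a $+$ edge, resp. $-$ edge. (In the paper's terminology: the left side is the total cluster-cost and the sum on the right the total LP-cost of the edges from $z$ to the cluster $\{u\}\cup T$.) *)

theory Defs
  imports Complex_Main
begin

text \<open>A labeled complete graph on the finite vertex set V: every pair of distinct
vertices is joined by a + edge (pos u v) or a - edge (not pos u v); pos is symmetric.\<close>
definition labeled_complete_graph :: "'a set \<Rightarrow> ('a \<Rightarrow> 'a \<Rightarrow> bool) \<Rightarrow> bool" where
  "labeled_complete_graph V pos \<longleftrightarrow> finite V \<and> (\<forall>u\<in>V. \<forall>v\<in>V. pos u v = pos v u)"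

definition Npos :: "'a set \<Rightarrow> ('a \<Rightarrow> 'a \<Rightarrow> bool) \<Rightarrow> 'a \<Rightarrow> 'a set" where
  "Npos V pos z = {w\<in>V. w \<noteq> z \<and> pos z w}"

definition Nneg :: "'a set \<Rightarrow> ('a \<Rightarrow> 'a \<Rightarrow> bool) \<Rightarrow> 'a \<Rightarrow> 'a set" where
  "Nneg V pos z = {w\<in>V. w \<noteq> z \<and> \<not> pos z w}"

definition fractional_clustering :: "'a set \<Rightarrow> ('a \<Rightarrow> 'a \<Rightarrow> real) \<Rightarrow> bool" where
  "fractional_clustering V x \<longleftrightarrow>
     (\<forall>u\<in>V. x u u = 0) \<and>
     (\<forall>u\<in>V. \<forall>v\<in>V. x u v = x v u \<and> 0 \<le> x u v \<and> x u v \<le> 1) \<and>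
     (\<forall>v\<in>V. \<forall>w\<in>V. \<forall>z\<in>V. v \<noteq> w \<and> w \<noteq> z \<and> v \<noteq> z \<longrightarrow> x v z \<le> x v w + x w z)"

text \<open>T_u (threshold alpha) and T*_u (threshold gamma) inside the remaining set S.\<close>
definition Tset :: "'a set \<Rightarrow> ('a \<Rightarrow> 'a \<Rightarrow> real) \<Rightarrow> real \<Rightarrow> 'a \<Rightarrow> 'a set" where
  "Tset S x t u = {w \<in> S - {u}. x u w \<le> t}"

inductive alg_state :: "'a set \<Rightarrow> ('a \<Rightarrow> 'a \<Rightarrow> real) \<Rightarrow> real \<Rightarrow> real \<Rightarrow> 'a set \<Rightarrow> bool"
  for V x \<alpha> \<gamma> where
  init: "alg_state V x \<alpha> \<gamma> V"
| step: "\<lbrakk> alg_state V x \<alpha> \<gamma> S; u \<in> S;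
           \<forall>v\<in>S. card (Tset S x \<gamma> v) \<le> card (Tset S x \<gamma> u) \<rbrakk> \<Longrightarrow>
         alg_state V x \<alpha> \<gamma>
           (if (\<Sum>w\<in>Tset S x \<alpha> u. x u w) \<ge> \<alpha> * real (card (Tset S x \<alpha> u)) / 2
            then S - {u} else S - ({u} \<union> Tset S x \<alpha> u))"

end

theory Submission
  imports Defs
begin

lemma alg_state_sub: "alg_state V x \<alpha> \<gamma> S \<Longrightarrow> S \<subseteq> V"
  by (induction rule: alg_state.induct) auto

theorem lemma5:
  fixes V :: "'a set" and pos :: "'a \<Rightarrow> 'a \<Rightarrow> bool" and x :: "'a \<Rightarrow> 'a \<Rightarrow> real"
    and \<alpha> \<gamma> :: real and S :: "'a set" and u z :: 'a
  assumes G: "labeled_complete_graph V pos"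
    and params: "0 < \<gamma>" "\<gamma> < \<alpha>" "\<alpha> < 1/2"
    and frac: "fractional_clustering V x"
    and reach: "alg_state V x \<alpha> \<gamma> S"
    and uS: "u \<in> S"
    and pivot: "\<forall>v\<in>S. card (Tset S x \<gamma> v) \<le> card (Tset S x \<gamma> u)"
    and small: "(\<Sum>w\<in>Tset S x \<alpha> u. x u w) < \<alpha> * real (card (Tset S x \<alpha> u)) / 2"
    and zS: "z \<in> S - ({u} \<union> Tset S x \<alpha> u)"
  shows "real (card (Npos V pos z \<inter> ({u} \<union> Tset S x \<alpha> u)))
     \<le> max (1 / (1 - 2 * \<alpha>)) (2 / \<alpha>) *
        ((\<Sum>w\<in>Npos V pos z \<inter> ({u} \<union> Tset S x \<alpha> u). x z w)
         + (\<Sum>w\<in>Nneg V pos z \<inter> ({u} \<union> Tset S x \<alpha> u). 1 - x z w))"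
proof -
  define T where "T = Tset S x \<alpha> u"
  define C where "C = {u} \<union> T"
  define P where "P = Npos V pos z \<inter> C"
  define N where "N = Nneg V pos z \<inter> C"
  define c where "c w = (if pos z w then x z w else 1 - x z w)" for w
  have SV: "S \<subseteq> V" using alg_state_sub[OF reach] .
  have finV: "finite V" using G unfolding labeled_complete_graph_def by auto
  have TS: "T \<subseteq> S" unfolding T_def Tset_def by auto
  have CV: "C \<subseteq> V" using TS SV uS unfolding C_def by auto
  have finC: "finite C" using CV finV finite_subset by auto
  have finT: "finite T" using TS SV finV by (meson finite_subset)
  have zV: "z \<in> V" using zS SV by auto
  have uV: "u \<in> V" using uS SV by auto
  have zC: "z \<notin> C" using zS unfolding C_def T_def by auto
  have uT: "u \<notin> T" unfolding T_def Tset_def by auto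
  have xuz: "x u z > \<alpha>" using zS unfolding Tset_def by auto
  have fc1: "\<And>a b. a \<in> V \<Longrightarrow> b \<in> V \<Longrightarrow> x a b = x b a \<and> 0 \<le> x a b \<and> x a b \<le> 1"
    using frac unfolding fractional_clustering_def by auto
  have tri: "\<And>a b d. a \<in> V \<Longrightarrow> b \<in> V \<Longrightarrow> d \<in> V \<Longrightarrow> a \<noteq> b \<Longrightarrow> b \<noteq> d \<Longrightarrow> a \<noteq> d \<Longrightarrow> x a d \<le> x a b + x b d"
    using frac unfolding fractional_clustering_def by blast
  have xuu: "x u u = 0" using frac uV unfolding fractional_clustering_def by auto
  have Peq: "P = C \<inter> {w. pos z w}" unfolding P_def Npos_def using CV zC by auto
  have Neq: "N = C \<inter> - {w. pos z w}" unfolding N_def Nneg_def using CV zC by auto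
  have cost: "(\<Sum>w\<in>P. x z w) + (\<Sum>w\<in>N. 1 - x z w) = (\<Sum>w\<in>C. c w)"
    unfolding c_def Peq Neq by (rule sum.If_cases[symmetric, OF finC])
  have cP: "card P \<le> card C" unfolding P_def by (rule card_mono[OF finC]) auto
  have finP: "finite P" unfolding P_def using finC by auto
  have finN: "finite N" unfolding N_def using finC by auto
  have Nnn: "(\<Sum>w\<in>N. 1 - x z w) \<ge> 0"
    by (rule sum_nonneg) (use fc1 zV CV in \<open>auto simp: N_def\<close>)
  have Pnn: "(\<Sum>w\<in>P. x z w) \<ge> 0"
    by (rule sum_nonneg) (use fc1 zV CV in \<open>auto simp: P_def\<close>)
  define K where "K = (\<Sum>w\<in>C. c w)"
  have K0: "K \<ge> 0" using cost Nnn Pnn K_def by linarith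
  have a12: "1 - 2*\<alpha> > 0" using params by auto
  have apos: "\<alpha> > 0" using params by auto
  have "real (card P) \<le> max (1 / (1 - 2 * \<alpha>)) (2 / \<alpha>) * K"
  proof (cases "x u z > 1 - \<alpha>")
    case True
    have lb: "\<And>w. w \<in> P \<Longrightarrow> 1 - 2*\<alpha> \<le> x z w"
    proof -
      fix w assume wP: "w \<in> P"
      hence wC: "w \<in> C" and wV: "w \<in> V" using CV unfolding P_def by auto
      show "1 - 2*\<alpha> \<le> x z w"
      proof (cases "w = u")
        case True thus ?thesis using \<open>x u z > 1 - \<alpha>\<close> fc1[OF uV zV] params by auto
      next
        case False
        hence wT: "w \<in> T" using wC C_def by auto
        hence "x u w \<le> \<alpha>" unfolding T_def Tset_def by auto
        moreover have "x z u \<le> x z w + x w u"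
          using tri[OF zV wV uV] False zC wC by (metis C_def UnCI insertI1 singleton_iff)
        moreover have "x w u = x u w" "x z u = x u z" using fc1 uV wV zV by auto
        ultimately show ?thesis using \<open>x u z > 1 - \<alpha>\<close> by linarith
      qed
    qed
    have "real (card P) * (1 - 2*\<alpha>) \<le> (\<Sum>w\<in>P. x z w)"
      using sum_bounded_below[of P "1 - 2*\<alpha>" "\<lambda>w. x z w"] lb by auto
    also have "\<dots> \<le> K" using cost Nnn K_def by linarith
    finally have "real (card P) \<le> K / (1 - 2*\<alpha>)" using a12 by (simp add: field_simps)
    also have "\<dots> = (1 / (1 - 2*\<alpha>)) * K" by simp
    also have "\<dots> \<le> max (1 / (1 - 2 * \<alpha>)) (2 / \<alpha>) * K"
      by (rule mult_right_mono) (use K0 in auto)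
    finally show ?thesis .
  next
    case False
    have lb: "\<And>w. w \<in> C \<Longrightarrow> \<alpha> - x u w \<le> c w"
    proof -
      fix w assume wC: "w \<in> C"
      hence wV: "w \<in> V" using CV by auto
      have xzu: "x z u = x u z" using fc1 uV zV by auto
      show "\<alpha> - x u w \<le> c w"
      proof (cases "w = u")
        case True thus ?thesis using False xuz xzu xuu unfolding c_def by auto
      next
        case wu: False
        hence wT: "w \<in> T" using wC C_def by auto
        have wz: "w \<noteq> z" using zC wC by auto
        have uz: "u \<noteq> z" using zC C_def by auto
        have t1: "x z u \<le> x z w + x w u" using tri[OF zV wV uV] wu wz uz by auto
        have t2: "x z w \<le> x z u + x u w" using tri[OF zV uV wV] wu wz uz by auto
        have "x w u = x u w" using fc1 uV wV by auto
        thus ?thesis using t1 t2 False xuz xzu unfolding c_def by auto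
      qed
    qed
    have "(\<Sum>w\<in>C. \<alpha> - x u w) \<le> K" unfolding K_def by (rule sum_mono) (rule lb)
    moreover have "(\<Sum>w\<in>C. \<alpha> - x u w) = \<alpha> * real (card C) - (\<Sum>w\<in>T. x u w)"
      unfolding C_def using finT uT xuu by (simp add: sum_subtractf)
    moreover have "card C = card T + 1" unfolding C_def using finT uT by simp
    moreover have "\<alpha> * real (card T) \<ge> 0" using apos by simp
    ultimately have "\<alpha> * real (card C) / 2 \<le> K" proof -
      assume h1: "(\<Sum>w\<in>C. \<alpha> - x u w) \<le> K" and h2: "(\<Sum>w\<in>C. \<alpha> - x u w) = \<alpha> * real (card C) - (\<Sum>w\<in>T. x u w)"
        and h3: "card C = card T + 1" and h4: "\<alpha> * real (card T) \<ge> 0"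
      have "\<alpha> * real (card C) = \<alpha> * real (card T) + \<alpha>" using h3 by (simp add: distrib_left)
      thus ?thesis using h1 h2 h4 small apos unfolding T_def by linarith
    qed
    hence "\<alpha> * real (card P) / 2 \<le> K" using cP apos
      by (smt (verit) divide_right_mono mult_left_mono of_nat_mono)
    hence "real (card P) \<le> (2 / \<alpha>) * K" using apos by (simp add: field_simps)
    also have "\<dots> \<le> max (1 / (1 - 2 * \<alpha>)) (2 / \<alpha>) * K"
      by (rule mult_right_mono) (use K0 in auto)
    finally show ?thesis .
  qed
  thus ?thesis using cost unfolding K_def P_def N_def C_def T_def by simp
qed

end
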